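(* Let $H$ be a CAT($-1$) space and let $\Phi\in\mathcal{H}$ be such that $\Phi$ and its flip $\hat\Phi$ are Hölder (of some exponent) with Hölder constants at most $L$, and $|\Phi|\leq L$. Then there exists a function $D:\mathbb{R}_{\geq0}\to\mathbb{R}$ such that for any two geodesics $\gamma_1,\gamma_2\in SH$, any $r\geq 0$ and any $t_1,t_2\in\mathbb{R}$ with $d(\gamma_1(0),\gamma_2(0))\leq r$ and $d(\gamma_1(t_1),\gamma_2(t_2))\leq r$, we have $|d^\Phi(\gamma_1(0),\gamma_1(t_1))-d^\Phi(\gamma_2(0),\gamma_2(t_2))|\leq D(r)$.
   Context: $SH$ is the space of unit speed bi-infinite geodesics $\gamma:\mathbb{R}\to H$ with metric $\operatorname{dist}(\gamma_1,\gamma_2)=\frac12\int_{-\infty}^{\infty}d(\gamma_1(t),\gamma_2(t))e^{-|t|}dt$ and geodesic flow $\mathsf g^t\gamma(s)=\gamma(s+t)$; every geodesic segment is assumed to extend to a bi-infinite geodesic. The flip of $\gamma$ is $-\gamma(t)=\gamma(-t)$ and $\hat\Phi(\gamma)=\Phi(-\gamma)$. $\mathcal{H}$ is the set of bounded Hölder functions $\Phi:(SH,\operatorname{dist})\to\mathbb{R}$ with $\Phi(\gamma_1)=\Phi(\gamma_2)$ whenever $\gamma_1|_{[0,\epsilon]}=\gamma_2|_{[0,\epsilon]}$ for some $\epsilon>0$. For $p\neq q$, $d^\Phi(p,q)=\int_0^{d(p,q)}\Phi(\mathsf g^t\gamma_{p,q})dt$ where $\gamma_{p,q}\in SH$ is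 any geodesic with $\gamma_{p,q}(0)=p$, $\gamma_{p,q}(d(p,q))=q$ (and $d^\Phi(p,p)=0$). *)

theory Defs
  imports "HOL-Analysis.Analysis"
begin

definition geodesic_segment :: "(real \<Rightarrow> 'a::metric_space) \<Rightarrow> 'a \<Rightarrow> 'a \<Rightarrow> bool" where
  "geodesic_segment c p q \<longleftrightarrow> c 0 = p \<and> c (dist p q) = q \<and>
     (\<forall>s\<in>{0..dist p q}. \<forall>t\<in>{0..dist p q}. dist (c s) (c t) = \<bar>s - t\<bar>)"

definition geodesic_space :: "'a::metric_space itself \<Rightarrow> bool" where
  "geodesic_space _ \<longleftrightarrow> (\<forall>p q::'a. \<exists>c. geodesic_segment c p q)"

text \<open>For points x = cq s on
  the side [p,q] and y = cr u on the side [p,r], the distance between the comparison points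
  in the hyperbolic plane is given by the hyperbolic law of cosines, with the comparison
  angle at p determined by the three side lengths a = d(p,q), b = d(p,r), c = d(q,r).\<close>
definition CAT_minus_one :: "'a::metric_space itself \<Rightarrow> bool" where
  "CAT_minus_one T \<longleftrightarrow> geodesic_space T \<and>
    (\<forall>p q r :: 'a. \<forall>cq cr. geodesic_segment cq p q \<longrightarrow> geodesic_segment cr p r \<longrightarrow>
      (\<forall>s\<in>{0..dist p q}. \<forall>u\<in>{0..dist p r}.
        cosh (dist (cq s) (cr u)) \<le>
          cosh s * cosh u - sinh s * sinh u *
            ((cosh (dist p q) * cosh (dist p r) - cosh (dist q r)) /
             (sinh (dist p q) * sinh (dist p r)))))"

definition SH :: "(real \<Rightarrow> 'a::metric_space) set" where
  "SH = {\<gamma>. \<forall>s t. dist (\<gamma> s) (\<gamma> t) = \<bar>s - t\<bar>}"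

definition distSH :: "(real \<Rightarrow> 'a::metric_space) \<Rightarrow> (real \<Rightarrow> 'a) \<Rightarrow> real" where
  "distSH \<gamma>1 \<gamma>2 = (1/2) * (LINT t|lborel. dist (\<gamma>1 t) (\<gamma>2 t) * exp (- \<bar>t\<bar>))"

definition geoflow :: "real \<Rightarrow> (real \<Rightarrow> 'a) \<Rightarrow> (real \<Rightarrow> 'a)" where
  "geoflow t \<gamma> = (\<lambda>s. \<gamma> (s + t))"

definition flip :: "(real \<Rightarrow> 'a) \<Rightarrow> (real \<Rightarrow> 'a)" where
  "flip \<gamma> = (\<lambda>t. \<gamma> (- t))"

definition hat :: "((real \<Rightarrow> 'a) \<Rightarrow> real) \<Rightarrow> ((real \<Rightarrow> 'a) \<Rightarrow> real)" where
  "hat \<Phi> = (\<lambda>\<gamma>. \<Phi> (flip \<gamma>))"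

definition hoelder_SH :: "((real \<Rightarrow> 'a::metric_space) \<Rightarrow> real) \<Rightarrow> real \<Rightarrow> real \<Rightarrow> bool" where
  "hoelder_SH \<Phi> \<alpha> C \<longleftrightarrow> 0 < \<alpha> \<and> \<alpha> \<le> 1 \<and>
     (\<forall>\<gamma>1\<in>SH. \<forall>\<gamma>2\<in>SH. \<bar>\<Phi> \<gamma>1 - \<Phi> \<gamma>2\<bar> \<le> C * distSH \<gamma>1 \<gamma>2 powr \<alpha>)"

definition Hclass :: "((real \<Rightarrow> 'a::metric_space) \<Rightarrow> real) set" where
  "Hclass = {\<Phi>. (\<exists>B. \<forall>\<gamma>\<in>SH. \<bar>\<Phi> \<gamma>\<bar> \<le> B) \<and> (\<exists>\<alpha> C. hoelder_SH \<Phi> \<alpha> C) \<and>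
     (\<forall>\<gamma>1\<in>SH. \<forall>\<gamma>2\<in>SH. (\<exists>\<epsilon>>0. \<forall>t\<in>{0..\<epsilon>}. \<gamma>1 t = \<gamma>2 t) \<longrightarrow> \<Phi> \<gamma>1 = \<Phi> \<gamma>2)}"

text \<open>d^Phi(p,q); the choice of the geodesic through p and q is irrelevant for Phi in Hclass
  on a CAT(-1) space (unique geodesics, Phi depends only on the forward germ).\<close>
definition dPhi :: "((real \<Rightarrow> 'a::metric_space) \<Rightarrow> real) \<Rightarrow> 'a \<Rightarrow> 'a \<Rightarrow> real" where
  "dPhi \<Phi> p q = (if p = q then 0 else
     (let \<gamma> = (SOME \<gamma>. \<gamma> \<in> SH \<and> \<gamma> 0 = p \<and> \<gamma> (dist p q) = q)
      in integral {0..dist p q} (\<lambda>t. \<Phi> (geoflow t \<gamma>))))"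

end

theory Submission
  imports Defs
begin


lemma cosh_ge_sq: "(x::real)^2 / 2 \<le> cosh x - 1"
proof -
  have c: "cosh x = 1 + 2 * sinh (x/2) ^ 2"
    using cosh_double[of "x/2"] by (simp add: cosh_square_eq)
  have "\<bar>x/2\<bar> \<le> \<bar>sinh (x/2)\<bar>"
    using real_le_abs_sinh[of "x/2"] by (simp add: sinh_field_def exp_minus)
  hence "(x/2)^2 \<le> sinh (x/2) ^ 2"
    by (metis abs_le_square_iff)
  thus ?thesis using c by (simp add: power_divide)
qed

lemma sinh_ratio: assumes "0 \<le> s" "s \<le> (m::real)"
  shows "sinh s \<le> sinh m * exp (s - m)"
proof -
  have "sinh m * exp (s - m) = (exp s - exp (s - 2*m)) / 2"
    by (simp add: sinh_field_def field_simps exp_diff exp_minus mult_exp_exp exp_add[symmetric])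
  moreover have "exp (s - 2*m) \<le> exp (-s)" using assms by simp
  ultimately show ?thesis by (simp add: sinh_field_def)
qed

lemma SH_dist: "\<gamma> \<in> SH \<Longrightarrow> dist (\<gamma> s) (\<gamma> t) = \<bar>s - t\<bar>"
  by (simp add: SH_def)

lemma SH_seg: assumes "\<gamma> \<in> SH" "T \<ge> 0" shows "geodesic_segment \<gamma> (\<gamma> 0) (\<gamma> T)"
  using assms by (simp add: geodesic_segment_def SH_dist)

lemma geom:
  fixes \<sigma> \<tau> :: "real \<Rightarrow> 'a::metric_space"
  assumes cat: "CAT_minus_one TYPE('a)" and S: "\<sigma> \<in> SH" "\<tau> \<in> SH" "\<sigma> 0 = \<tau> 0"
    and s: "0 \<le> s" "s \<le> T1" "s \<le> T2" and d: "dist (\<sigma> T1) (\<tau> T2) \<le> r"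
  shows "dist (\<sigma> s) (\<tau> s) \<le> sqrt (2 * cosh r) * exp (s - min T1 T2)"
proof (cases "s = 0")
  case True thus ?thesis using S by simp
next
  case False
  hence sp: "s > 0" using s by simp
  have T1p: "T1 > 0" "T2 > 0" using s sp by auto
  define p where "p = \<sigma> 0"
  define q where "q = \<sigma> T1"
  define q' where "q' = \<tau> T2"
  define c where "c = dist q q'"
  define e where "e = dist (\<sigma> s) (\<tau> s)"
  define m where "m = min T1 T2"
  have dpq: "dist p q = T1" using SH_dist[OF S(1), of 0 T1] T1p by (simp add: p_def q_def)
  have dpq': "dist p q' = T2" using SH_dist[OF S(2), of 0 T2] T1p S(3) by (simp add: p_def q'_def)
  have g1: "geodesic_segment \<sigma> p q" using SH_seg[OF S(1), of T1] T1p by (simp add: p_def q_def)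
  have g2: "geodesic_segment \<tau> p q'" using SH_seg[OF S(2), of T2] T1p S(3) by (simp add: p_def q'_def)
  have "cosh e \<le> cosh s * cosh s - sinh s * sinh s *
            ((cosh T1 * cosh T2 - cosh c) / (sinh T1 * sinh T2))"
  proof -
    have "\<forall>s\<in>{0..dist p q}. \<forall>u\<in>{0..dist p q'}.
        cosh (dist (\<sigma> s) (\<tau> u)) \<le> cosh s * cosh u - sinh s * sinh u *
            ((cosh (dist p q) * cosh (dist p q') - cosh (dist q q')) /
             (sinh (dist p q) * sinh (dist p q')))"
      using cat g1 g2 unfolding CAT_minus_one_def by blast
    thus ?thesis using s unfolding dpq dpq' e_def c_def by auto
  qed
  define X where "X = sinh T1 * sinh T2"
  have Xp: "X > 0" using T1p by (simp add: X_def)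
  have "cosh T1 * cosh T2 = X + cosh (T1 - T2)" by (simp add: X_def cosh_diff)
  hence "(cosh T1 * cosh T2 - cosh c) / X = 1 + (cosh (T1 - T2) - cosh c) / X"
    using Xp by (simp add: field_simps)
  with \<open>cosh e \<le> _\<close> have "cosh e \<le> cosh s ^2 - sinh s ^2 - sinh s ^ 2 * ((cosh (T1 - T2) - cosh c) / X)"
    unfolding X_def[symmetric] by (simp add: power2_eq_square algebra_simps)
  hence ce: "cosh e - 1 \<le> sinh s ^ 2 * ((cosh c - cosh (T1 - T2)) / X)"
    by (simp add: hyperbolic_pythagoras algebra_simps diff_divide_distrib)
  have "c \<le> r" using d by (simp add: c_def q_def q'_def)
  hence "cosh c \<le> cosh r" using cosh_real_nonneg_le_iff[of c r] zero_le_dist[of q q'] by (simp add: c_def)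
  moreover have "cosh (T1 - T2) \<ge> 1" by (rule cosh_real_ge_1)
  ultimately have "(cosh c - cosh (T1 - T2)) / X \<le> cosh r / X" using Xp
    by (intro divide_right_mono) auto
  hence ce2: "cosh e - 1 \<le> sinh s ^ 2 * (cosh r / X)"
    using ce by (meson order_trans mult_left_mono zero_le_power2)
  have sm: "sinh s \<le> sinh m * exp (s - m)" using sinh_ratio[of s m] s sp by (simp add: m_def)
  have "0 \<le> sinh s" using sp by simp
  hence "sinh s ^ 2 \<le> (sinh m * exp (s - m)) ^ 2" using sm by (simp add: power_mono)
  also have "\<dots> = sinh m * sinh m * exp (2 * (s - m))"
    by (simp add: power2_eq_square mult_exp_exp)
  also have "\<dots> \<le> X * exp (2 * (s - m))"
  proof -
    have "0 \<le> sinh m" using T1p by (simp add: m_def)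
    moreover have "sinh m \<le> sinh T1" "sinh m \<le> sinh T2" by (auto simp: m_def)
    ultimately have "sinh m * sinh m \<le> X" unfolding X_def by (intro mult_mono) auto
    thus ?thesis by simp
  qed
  finally have A: "sinh s ^ 2 \<le> X * exp (2 * (s - m))" .
  have "sinh s ^ 2 * (cosh r / X) \<le> X * exp (2 * (s - m)) * (cosh r / X)"
    by (rule mult_right_mono[OF A]) (use Xp in simp)
  also have "\<dots> = cosh r * exp (2 * (s - m))" using Xp by simp
  finally have "e^2 / 2 \<le> cosh r * exp (2 * (s - m))" using ce2 cosh_ge_sq[of e] by linarith
  moreover have "(sqrt (2 * cosh r) * exp (s - m))^2 = 2 * cosh r * exp (2 * (s - m))"
  proof -
    have "exp (s - m) * exp (s - m) = exp (2 * (s - m))" by (simp add: mult_exp_exp)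
    moreover have "sqrt (2 * cosh r) * sqrt (2 * cosh r) = 2 * cosh r"
      by (simp add: less_imp_le)
    ultimately show ?thesis by (simp add: power2_eq_square algebra_simps)
  qed
  ultimately have "e^2 \<le> (sqrt (2 * cosh r) * exp (s - m))^2" by simp
  hence "e \<le> sqrt (2 * cosh r) * exp (s - m)"
    by (rule power2_le_imp_le) simp
  thus ?thesis by (simp add: e_def m_def)
qed



lemma exp_abs_integrable: "integrable lborel (\<lambda>u::real. exp (- \<bar>u\<bar> / 2))"
proof -
  let ?g = "\<lambda>u::real. exp (- \<bar>u\<bar> / 2)"
  have i0: "(\<lambda>x. exp (- (1/2) * x) :: real) integrable_on {0..}"
    by (rule integrable_on_exp_minus_to_infinity) simp
  have i1: "?g integrable_on {0..}"
    by (rule integrable_eq[OF i0]) auto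
  have a1: "?g absolutely_integrable_on {0..}"
    by (rule nonnegative_absolutely_integrable_1[OF i1]) auto
  have a2: "?g absolutely_integrable_on {..0}"
    using has_absolute_integral_reflect_real[of "{..0}" "{0..}" ?g "integral {0..} ?g"] a1
    by auto
  have "?g absolutely_integrable_on ({..0} \<union> {0..})"
    by (rule absolutely_integrable_Un[OF a2 a1])
  moreover have "{..0} \<union> {0::real..} = UNIV" by auto
  ultimately have "integrable lebesgue ?g"
    by (simp add: set_integrable_def)
  moreover have "?g \<in> borel_measurable lborel"
    unfolding measurable_lborel2 by (intro borel_measurable_continuous_onI continuous_intros) auto
  ultimately show ?thesis
    by (simp add: integrable_completion)
qed

definition Mx :: real where "Mx = (LINT u|lborel. exp (- \<bar>u\<bar> / 2))"

lemma Mx_nonneg: "0 \<le> Mx"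
  unfolding Mx_def by (rule integral_nonneg_AE) auto

lemma distSH_nonneg: "0 \<le> distSH \<gamma> \<eta>"
  unfolding distSH_def by (auto intro!: integral_nonneg_AE)

lemma distSH_bound:
  assumes P: "0 \<le> P" and b: "\<And>u. dist (\<gamma> u) (\<eta> u) \<le> P * exp (\<bar>u\<bar> / 2)"
  shows "distSH \<gamma> \<eta> \<le> P * Mx / 2"
proof -
  let ?f = "\<lambda>u. dist (\<gamma> u) (\<eta> u) * exp (- \<bar>u\<bar>)"
  have fb: "?f u \<le> P * exp (- \<bar>u\<bar> / 2)" for u
  proof -
    have "?f u \<le> P * exp (\<bar>u\<bar> / 2) * exp (- \<bar>u\<bar>)"
      by (rule mult_right_mono[OF b]) simp
    also have "\<dots> = P * exp (- \<bar>u\<bar> / 2)"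
      by (simp add: mult.assoc mult_exp_exp)
    finally show ?thesis .
  qed
  have "(LINT u|lborel. ?f u) \<le> P * Mx"
  proof (cases "integrable lborel ?f")
    case True
    have "(LINT u|lborel. ?f u) \<le> (LINT u|lborel. P * exp (- \<bar>u\<bar> / 2))"
      by (rule integral_mono[OF True]) (use exp_abs_integrable fb in auto)
    thus ?thesis by (simp add: Mx_def)
  next
    case False thus ?thesis using P Mx_nonneg by (simp add: not_integrable_integral_eq)
  qed
  thus ?thesis unfolding distSH_def by simp
qed

lemma geoflow_SH: "\<gamma> \<in> SH \<Longrightarrow> geoflow t \<gamma> \<in> SH"
  by (simp add: SH_def geoflow_def)

lemma flip_SH: "\<gamma> \<in> SH \<Longrightarrow> flip \<gamma> \<in> SH"
  by (simp add: SH_def flip_def abs_minus_commute)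

lemma distSH_flow: assumes "\<sigma> \<in> SH"
  shows "distSH (geoflow t \<sigma>) (geoflow s \<sigma>) \<le> \<bar>t - s\<bar> * Mx / 2"
proof (rule distSH_bound)
  fix u
  have "dist (geoflow t \<sigma> u) (geoflow s \<sigma> u) = \<bar>t - s\<bar>"
    using assms by (simp add: geoflow_def SH_dist)
  also have "\<dots> \<le> \<bar>t - s\<bar> * exp (\<bar>u\<bar> / 2)"
    by (rule mult_le_cancel_left1[THEN iffD2]) simp
  finally show "dist (geoflow t \<sigma> u) (geoflow s \<sigma> u) \<le> \<bar>t - s\<bar> * exp (\<bar>u\<bar> / 2)" .
qed simp

lemma hoelder_cont:
  assumes H: "hoelder_SH \<Psi> \<alpha> C" and S: "\<sigma> \<in> SH"
  shows "continuous_on A (\<lambda>t. \<Psi> (geoflow t \<sigma>))"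
proof -
  have a: "0 < \<alpha>" using H by (simp add: hoelder_SH_def)
  have "isCont (\<lambda>t. \<Psi> (geoflow t \<sigma>)) t" for t
  proof -
    let ?g = "\<lambda>s. \<bar>C\<bar> * (\<bar>s - t\<bar> * Mx / 2) powr \<alpha>"
    have le: "norm (\<Psi> (geoflow s \<sigma>) - \<Psi> (geoflow t \<sigma>)) \<le> ?g s" for s
    proof -
      have "\<bar>\<Psi> (geoflow s \<sigma>) - \<Psi> (geoflow t \<sigma>)\<bar> \<le> C * distSH (geoflow s \<sigma>) (geoflow t \<sigma>) powr \<alpha>"
        using H geoflow_SH[OF S] by (simp add: hoelder_SH_def)
      also have "\<dots> \<le> \<bar>C\<bar> * distSH (geoflow s \<sigma>) (geoflow t \<sigma>) powr \<alpha>"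
        by (rule mult_right_mono) auto
      also have "\<dots> \<le> ?g s"
        by (intro mult_left_mono powr_mono2 distSH_flow[OF S]) (use a distSH_nonneg in auto)
      finally show ?thesis by simp
    qed
    have gt0: "(?g \<longlongrightarrow> \<bar>C\<bar> * 0) (at t)"
    proof -
      have t1: "((\<lambda>s. \<bar>s - t\<bar> * Mx / 2) \<longlongrightarrow> 0) (at t)"
      proof -
        have "((\<lambda>s. \<bar>s - t\<bar> * Mx / 2) \<longlongrightarrow> \<bar>t - t\<bar> * Mx / 2) (at t)"
          by (intro tendsto_intros) simp
        thus ?thesis by simp
      qed
      have "((\<lambda>s. (\<bar>s - t\<bar> * Mx / 2) powr \<alpha>) \<longlongrightarrow> 0) (at t)"
        by (rule tendsto_zero_powrI[OF t1 tendsto_const]) (use a Mx_nonneg in auto)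
      thus ?thesis by (intro tendsto_mult) auto
    qed
    have ev: "eventually (\<lambda>s. norm (\<Psi> (geoflow s \<sigma>) - \<Psi> (geoflow t \<sigma>)) \<le> ?g s) (at t)"
      by (intro always_eventually allI le)
    have gt: "(?g \<longlongrightarrow> 0) (at t)" using gt0 by simp
    have "((\<lambda>s. \<Psi> (geoflow s \<sigma>) - \<Psi> (geoflow t \<sigma>)) \<longlongrightarrow> 0) (at t)"
      by (rule Lim_null_comparison[OF ev gt])
    thus ?thesis unfolding isCont_def by (simp add: LIM_zero_iff)
  qed
  thus ?thesis by (simp add: continuous_at_imp_continuous_on)
qed

lemma hoelder_int:
  assumes "hoelder_SH \<Psi> \<alpha> C" "\<sigma> \<in> SH"
  shows "(\<lambda>t. \<Psi> (geoflow t \<sigma>)) integrable_on {a..b}"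
  by (rule integrable_continuous_real[OF hoelder_cont[OF assms]])



definition Iint :: "((real \<Rightarrow> 'a) \<Rightarrow> real) \<Rightarrow> (real \<Rightarrow> 'a) \<Rightarrow> real \<Rightarrow> real" where
  "Iint \<Psi> \<sigma> T = integral {0..T} (\<lambda>t. \<Psi> (geoflow t \<sigma>))"

definition D0 :: "real \<Rightarrow> real \<Rightarrow> real \<Rightarrow> real \<Rightarrow> real" where
  "D0 \<alpha> C L r = L * r + 8 * \<bar>C\<bar> * (((sqrt (2 * cosh r) + 4) * Mx / 2) powr \<alpha>) / \<alpha>"

lemma two_le_exp: "0 \<le> (w::real) \<Longrightarrow> 2 * w \<le> 4 * exp (w / 2)"
  using exp_ge_add_one_self[of "w/2"] by linarith

lemma pointwise:
  fixes \<sigma> \<tau> :: "real \<Rightarrow> 'a::metric_space"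
  assumes cat: "CAT_minus_one TYPE('a)" and S: "\<sigma> \<in> SH" "\<tau> \<in> SH" "\<sigma> 0 = \<tau> 0"
    and m: "0 \<le> m" "m \<le> T2" and d: "dist (\<sigma> m) (\<tau> T2) \<le> r"
    and t: "0 \<le> t" "t \<le> m"
  shows "dist (\<sigma> (u + t)) (\<tau> (u + t)) \<le>
     (sqrt (2 * cosh r) + 4) * (exp (- (m - t) / 2) + exp (- t / 2)) * exp (\<bar>u\<bar> / 2)"
proof -
  define K1 where "K1 = sqrt (2 * cosh r)"
  define s where "s = u + t"
  have K1: "0 \<le> K1" by (simp add: K1_def)
  have mn: "min m T2 = m" using m by simp
  have G: "dist (\<sigma> x) (\<tau> x) \<le> K1 * exp (x - m)" if "0 \<le> x" "x \<le> m" for x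
    using geom[OF cat S that(1) that(2) _ d] that m by (simp add: mn K1_def)
  have A: "dist (\<sigma> s) (\<tau> s) \<le> (K1 + 4) * exp (- (m - t) / 2) * exp (\<bar>u\<bar> / 2)
            \<or> dist (\<sigma> s) (\<tau> s) \<le> (K1 + 4) * exp (- t / 2) * exp (\<bar>u\<bar> / 2)"
  proof (cases "s < 0")
    case True
    have "dist (\<sigma> s) (\<tau> s) \<le> dist (\<sigma> s) (\<sigma> 0) + dist (\<tau> 0) (\<tau> s)"
      using dist_triangle[of "\<sigma> s" "\<tau> s" "\<sigma> 0"] S(3) by (simp add: dist_commute)
    also have "\<dots> = 2 * (- s)" using SH_dist[OF S(1), of s 0] SH_dist[OF S(2), of 0 s] True by simp
    also have "\<dots> \<le> 4 * exp (- s / 2)" using two_le_exp[of "-s"] True by simp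
    also have "\<dots> \<le> (K1 + 4) * exp (- s / 2)" using K1 by (intro mult_right_mono) auto
    also have "exp (- s / 2) = exp (- t / 2) * exp (\<bar>u\<bar> / 2)"
    proof -
      have "\<bar>u\<bar> = - u" using True t by (simp add: s_def)
      moreover have "- t / 2 + - u / 2 = - s / 2" by (simp add: s_def field_simps)
      ultimately show ?thesis by (simp add: mult_exp_exp)
    qed
    finally show ?thesis by (simp add: mult.assoc)
  next
    case False
    show ?thesis
    proof (cases "s \<le> m")
      case True
      have "dist (\<sigma> s) (\<tau> s) \<le> K1 * exp (s - m)" using G False True by simp
      also have "\<dots> \<le> (K1 + 4) * exp (- (m - t) / 2 + \<bar>u\<bar> / 2)"
      proof -
        have "s - m \<le> - (m - t) / 2 + \<bar>u\<bar> / 2" using True t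
          unfolding s_def by (cases "u < 0") (simp_all add: field_simps)
        thus ?thesis using K1 by (intro mult_mono) auto
      qed
      finally show ?thesis by (simp add: mult.assoc mult_exp_exp)
    next
      case False2: False
      have "dist (\<sigma> s) (\<tau> s) \<le> dist (\<sigma> s) (\<sigma> m) + dist (\<sigma> m) (\<tau> m) + dist (\<tau> m) (\<tau> s)"
        using dist_triangle[of "\<sigma> s" "\<tau> s" "\<sigma> m"] dist_triangle[of "\<sigma> m" "\<tau> s" "\<tau> m"] by linarith
      also have "\<dots> \<le> 2 * (s - m) + K1"
        using G[of m] m False2 S by (simp add: SH_dist)
      also have "\<dots> \<le> (K1 + 4) * exp ((s - m) / 2)"
      proof -
        have "2 * (s - m) \<le> 4 * exp ((s - m) / 2)" using two_le_exp[of "s - m"] False2 by simp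
        moreover have "K1 \<le> K1 * exp ((s - m) / 2)" using K1 False2
          by (intro mult_le_cancel_left1[THEN iffD2]) auto
        ultimately show ?thesis by (simp add: algebra_simps)
      qed
      also have "exp ((s - m) / 2) = exp (- (m - t) / 2) * exp (\<bar>u\<bar> / 2)"
      proof -
        have "\<bar>u\<bar> = u" using False2 t by (simp add: s_def)
        moreover have "- (m - t) / 2 + u / 2 = (s - m) / 2" by (simp add: s_def field_simps)
        ultimately show ?thesis by (simp add: mult_exp_exp)
      qed
      finally show ?thesis by (simp add: mult.assoc)
    qed
  qed
  have "(K1 + 4) * exp (- (m - t) / 2) * exp (\<bar>u\<bar> / 2) \<le> (K1 + 4) * (exp (- (m - t) / 2) + exp (- t / 2)) * exp (\<bar>u\<bar> / 2)"
    "(K1 + 4) * exp (- t / 2) * exp (\<bar>u\<bar> / 2) \<le> (K1 + 4) * (exp (- (m - t) / 2) + exp (- t / 2)) * exp (\<bar>u\<bar> / 2)"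
    using K1 by (auto intro!: mult_right_mono mult_left_mono)
  with A show ?thesis unfolding s_def K1_def by linarith
qed



lemma exp_powr: "exp (x::real) powr a = exp (a * x)"
  by (simp add: powr_def)

lemma sub_powr:
  assumes "0 \<le> A" "0 \<le> B" "0 < \<alpha>" "\<alpha> \<le> (1::real)"
  shows "(A + B) powr \<alpha> \<le> 2 * (A powr \<alpha> + B powr \<alpha>)"
proof -
  have "(A + B) powr \<alpha> \<le> (2 * max A B) powr \<alpha>"
    using assms by (intro powr_mono2) auto
  also have "\<dots> = 2 powr \<alpha> * max A B powr \<alpha>"
    using assms by (simp add: powr_mult)
  also have "\<dots> \<le> 2 * (A powr \<alpha> + B powr \<alpha>)"
  proof (rule mult_mono)
    show "2 powr \<alpha> \<le> 2" using powr_mono[of \<alpha> 1 2] assms by simp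
    show "max A B powr \<alpha> \<le> A powr \<alpha> + B powr \<alpha>" by (cases "A \<le> B") (auto simp: max_def)
  qed auto
  finally show ?thesis .
qed

lemma lemA_le:
  fixes \<sigma> \<tau> :: "real \<Rightarrow> 'a::metric_space"
  assumes cat: "CAT_minus_one TYPE('a)" and H: "hoelder_SH \<Psi> \<alpha> C"
    and Bd: "\<forall>\<gamma>\<in>SH. \<bar>\<Psi> \<gamma>\<bar> \<le> L"
    and S: "\<sigma> \<in> SH" "\<tau> \<in> SH" "\<sigma> 0 = \<tau> 0"
    and T: "0 \<le> T1" "T1 \<le> T2" and d: "dist (\<sigma> T1) (\<tau> T2) \<le> r"
  shows "\<bar>Iint \<Psi> \<sigma> T1 - Iint \<Psi> \<tau> T2\<bar> \<le> D0 \<alpha> C L r"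
proof -
  have a: "0 < \<alpha>" "\<alpha> \<le> 1" using H by (auto simp: hoelder_SH_def)
  have r0: "0 \<le> r" using d zero_le_dist order_trans by blast
  have L0: "0 \<le> L" using Bd S(1) by (meson abs_ge_zero order_trans)
  have T2r: "T2 - T1 \<le> r"
  proof -
    have "T2 = dist (\<tau> 0) (\<tau> T2)" using SH_dist[OF S(2), of 0 T2] T by simp
    also have "\<dots> \<le> dist (\<tau> 0) (\<sigma> T1) + dist (\<sigma> T1) (\<tau> T2)" by (rule dist_triangle)
    also have "dist (\<tau> 0) (\<sigma> T1) = T1" using SH_dist[OF S(1), of 0 T1] T S(3) by simp
    finally show ?thesis using d by linarith
  qed
  define K where "K = sqrt (2 * cosh r) + 4"
  define Q where "Q = K * Mx / 2"
  have K0: "0 \<le> K" by (simp add: K_def)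
  have Q0: "0 \<le> Q" using K0 Mx_nonneg by (simp add: Q_def)
  define f where "f t = \<Psi> (geoflow t \<sigma>)" for t
  define g where "g t = \<Psi> (geoflow t \<tau>)" for t
  have fi: "f integrable_on {a..b}" for a b unfolding f_def by (rule hoelder_int[OF H S(1)])
  have gi: "g integrable_on {a..b}" for a b unfolding g_def by (rule hoelder_int[OF H S(2)])
  have split: "Iint \<Psi> \<tau> T2 = Iint \<Psi> \<tau> T1 + integral {T1..T2} g"
    unfolding Iint_def g_def[symmetric] using Henstock_Kurzweil_Integration.integral_combine[OF T gi] by simp
  have tail: "\<bar>integral {T1..T2} g\<bar> \<le> L * r"
  proof -
    have "norm (integral {T1..T2} g) \<le> integral {T1..T2} (\<lambda>_. L)"
      by (rule integral_norm_bound_integral[OF gi]) (use Bd geoflow_SH[OF S(2)] in \<open>auto simp: g_def\<close>)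
    also have "\<dots> = (T2 - T1) * L" using T by simp
    also have "\<dots> \<le> r * L" using T2r L0 by (intro mult_right_mono) auto
    finally show ?thesis by (simp add: mult.commute)
  qed
  define c0 where "c0 = 2 * \<bar>C\<bar> * Q powr \<alpha>"
  have c00: "0 \<le> c0" by (simp add: c0_def)
  define h where "h t = c0 * (exp (- (\<alpha>/2) * (T1 - t)) + exp (- (\<alpha>/2) * t))" for t
  define HH where "HH t = c0 * (exp (- (\<alpha>/2) * (T1 - t)) / (\<alpha>/2) - exp (- (\<alpha>/2) * t) / (\<alpha>/2))" for t
  have hint: "(h has_integral (HH T1 - HH 0)) {0..T1}"
    unfolding h_def HH_def using T a
    by (intro fundamental_theorem_of_calculus)
       (auto intro!: derivative_eq_intros simp flip: has_real_derivative_iff_has_vector_derivative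
             simp: field_simps)
  have HHb: "HH T1 - HH 0 \<le> 8 * \<bar>C\<bar> * Q powr \<alpha> / \<alpha>"
  proof -
    have e: "exp (- (\<alpha>/2) * T1) \<le> 1" using a T by simp
    have "HH T1 - HH 0 = c0 * (2 * (1 - exp (- (\<alpha>/2) * T1)) / (\<alpha>/2))"
      unfolding HH_def using a by (simp add: field_simps)
    also have "\<dots> \<le> c0 * (2 * 1 / (\<alpha>/2))"
      using e a c00 exp_gt_zero[of "- (\<alpha>/2) * T1"]
      by (intro mult_left_mono divide_right_mono) auto
    also have "\<dots> = 8 * \<bar>C\<bar> * Q powr \<alpha> / \<alpha>" by (simp add: c0_def field_simps)
    finally show ?thesis .
  qed
  have pw: "norm (f t - g t) \<le> h t" if t: "t \<in> {0..T1}" for t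
  proof -
    define A where "A = exp (- (T1 - t) / 2)"
    define B where "B = exp (- t / 2)"
    have AB: "0 \<le> A" "0 \<le> B" by (auto simp: A_def B_def)
    have ds: "distSH (geoflow t \<sigma>) (geoflow t \<tau>) \<le> Q * (A + B)"
    proof -
      have "distSH (geoflow t \<sigma>) (geoflow t \<tau>) \<le> K * (A + B) * Mx / 2"
      proof (rule distSH_bound)
        show "0 \<le> K * (A + B)" using K0 AB by simp
        fix u
        show "dist (geoflow t \<sigma> u) (geoflow t \<tau> u) \<le> K * (A + B) * exp (\<bar>u\<bar> / 2)"
          using pointwise[OF cat S T(1) T(2) d, of t u] t
          by (simp add: geoflow_def K_def A_def B_def)
      qed
      thus ?thesis by (simp add: Q_def algebra_simps)
    qed
    have "\<bar>f t - g t\<bar> \<le> C * distSH (geoflow t \<sigma>) (geoflow t \<tau>) powr \<alpha>"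
      using H geoflow_SH[OF S(1)] geoflow_SH[OF S(2)] by (simp add: hoelder_SH_def f_def g_def)
    also have "\<dots> \<le> \<bar>C\<bar> * distSH (geoflow t \<sigma>) (geoflow t \<tau>) powr \<alpha>"
      by (rule mult_right_mono) auto
    also have "\<dots> \<le> \<bar>C\<bar> * (Q * (A + B)) powr \<alpha>"
      by (intro mult_left_mono powr_mono2 ds) (use a distSH_nonneg in auto)
    also have "\<dots> = \<bar>C\<bar> * (Q powr \<alpha> * (A + B) powr \<alpha>)"
      using Q0 AB by (simp add: powr_mult)
    also have "\<dots> \<le> \<bar>C\<bar> * (Q powr \<alpha> * (2 * (A powr \<alpha> + B powr \<alpha>)))"
      by (intro mult_left_mono sub_powr) (use AB a in auto)
    also have "A powr \<alpha> = exp (- (\<alpha>/2) * (T1 - t))" by (simp add: A_def exp_powr field_simps)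
    also have "B powr \<alpha> = exp (- (\<alpha>/2) * t)" by (simp add: B_def exp_powr field_simps)
    also have "\<bar>C\<bar> * (Q powr \<alpha> * (2 * (exp (- (\<alpha>/2) * (T1 - t)) + exp (- (\<alpha>/2) * t)))) = h t"
      by (simp add: h_def c0_def algebra_simps)
    finally show ?thesis by simp
  qed
  have main: "\<bar>Iint \<Psi> \<sigma> T1 - Iint \<Psi> \<tau> T1\<bar> \<le> 8 * \<bar>C\<bar> * Q powr \<alpha> / \<alpha>"
  proof -
    have "Iint \<Psi> \<sigma> T1 - Iint \<Psi> \<tau> T1 = integral {0..T1} (\<lambda>t. f t - g t)"
      unfolding Iint_def f_def[symmetric] g_def[symmetric] by (rule integral_diff[symmetric, OF fi gi])
    also have "norm \<dots> \<le> integral {0..T1} h"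
      by (rule integral_norm_bound_integral) (use fi gi hint pw in \<open>auto simp: has_integral_integrable intro!: integrable_diff\<close>)
    also have "\<dots> = HH T1 - HH 0" using hint by (rule integral_unique)
    finally show ?thesis using HHb by simp
  qed
  show ?thesis
    using main tail split unfolding D0_def Q_def K_def by linarith
qed

lemma lemA:
  fixes \<sigma> \<tau> :: "real \<Rightarrow> 'a::metric_space"
  assumes cat: "CAT_minus_one TYPE('a)" and H: "hoelder_SH \<Psi> \<alpha> C"
    and Bd: "\<forall>\<gamma>\<in>SH. \<bar>\<Psi> \<gamma>\<bar> \<le> L"
    and S: "\<sigma> \<in> SH" "\<tau> \<in> SH" "\<sigma> 0 = \<tau> 0"
    and T: "0 \<le> T1" "0 \<le> T2" and d: "dist (\<sigma> T1) (\<tau> T2) \<le> r"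
  shows "\<bar>Iint \<Psi> \<sigma> T1 - Iint \<Psi> \<tau> T2\<bar> \<le> D0 \<alpha> C L r"
proof (cases "T1 \<le> T2")
  case True thus ?thesis using lemA_le[OF cat H Bd S T(1) True d] by simp
next
  case False
  have "\<bar>Iint \<Psi> \<tau> T2 - Iint \<Psi> \<sigma> T1\<bar> \<le> D0 \<alpha> C L r"
    using lemA_le[OF cat H Bd S(2) S(1) S(3)[symmetric] T(2), of T1 r] False d
    by (simp add: dist_commute)
  thus ?thesis by (simp add: abs_minus_commute)
qed



lemma integral_rev:
  fixes f :: "real \<Rightarrow> real"
  assumes fi: "f integrable_on {0..T}" and T: "0 \<le> T"
  shows "integral {0..T} (\<lambda>t. f (T - t)) = integral {0..T} f"
proof -
  have "(f has_integral integral {0..T} f) (cbox 0 T)"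
    using fi by (simp add: has_integral_integral)
  from has_integral_affinity[OF this, of "-1" T]
  have "((\<lambda>x. f (- x + T)) has_integral integral {0..T} f) ((\<lambda>x. - x + T) ` {0..T})"
    by simp
  moreover have "(\<lambda>x. - x + T) ` {0..T} = {0..T}"
    using image_affinity_atLeastAtMost[of "-1" T 0 T] T by simp
  ultimately have "((\<lambda>x. f (T - x)) has_integral integral {0..T} f) {0..T}"
    by simp
  thus ?thesis by (rule integral_unique)
qed

lemma exSH: assumes "\<gamma> \<in> SH"
  shows "\<exists>\<sigma>\<in>SH. \<sigma> 0 = \<gamma> 0 \<and> \<sigma> (dist (\<gamma> 0) (\<gamma> t)) = \<gamma> t"
proof (cases "0 \<le> t")
  case True thus ?thesis using assms SH_dist[OF assms, of 0 t] by (intro bexI[of _ \<gamma>]) auto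
next
  case False
  have "flip \<gamma> \<in> SH" by (rule flip_SH[OF assms])
  thus ?thesis using False SH_dist[OF assms, of 0 t]
    by (intro bexI[of _ "flip \<gamma>"]) (auto simp: flip_def)
qed

lemma dPhi_eq:
  assumes "\<exists>\<sigma>\<in>SH. \<sigma> 0 = p \<and> \<sigma> (dist p q) = q"
  shows "\<exists>\<sigma>\<in>SH. \<sigma> 0 = p \<and> \<sigma> (dist p q) = q \<and> dPhi \<Phi> p q = Iint \<Phi> \<sigma> (dist p q)"
proof -
  define \<sigma> where "\<sigma> = (SOME \<gamma>. \<gamma> \<in> SH \<and> \<gamma> 0 = p \<and> \<gamma> (dist p q) = q)"
  have s: "\<sigma> \<in> SH \<and> \<sigma> 0 = p \<and> \<sigma> (dist p q) = q"
    using someI_ex[of "\<lambda>\<gamma>. \<gamma> \<in> SH \<and> \<gamma> 0 = p \<and> \<gamma> (dist p q) = q"] assms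
    unfolding \<sigma>_def by blast
  have "dPhi \<Phi> p q = Iint \<Phi> \<sigma> (dist p q)"
    by (cases "p = q") (simp_all add: dPhi_def Iint_def \<sigma>_def Let_def)
  with s show ?thesis by blast
qed

lemma rev_SH: "\<tau> \<in> SH \<Longrightarrow> (\<lambda>s. \<tau> (T - s)) \<in> SH"
  by (simp add: SH_def abs_minus_commute)

lemma Iint_rev:
  assumes H: "hoelder_SH \<Phi> \<alpha> C" and S: "\<tau> \<in> SH" and T: "0 \<le> T"
  shows "Iint (hat \<Phi>) (\<lambda>s. \<tau> (T - s)) T = Iint \<Phi> \<tau> T"
proof -
  have e: "hat \<Phi> (geoflow t (\<lambda>s. \<tau> (T - s))) = \<Phi> (geoflow (T - t) \<tau>)" for t
  proof -
    have "flip (geoflow t (\<lambda>s. \<tau> (T - s))) = geoflow (T - t) \<tau>"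
      by (rule ext) (simp add: flip_def geoflow_def algebra_simps)
    thus ?thesis by (simp add: hat_def)
  qed
  show ?thesis
    unfolding Iint_def e
    using integral_rev[OF hoelder_int[OF H S] T] by simp
qed

theorem corollary4p5:
  fixes \<Phi> :: "(real \<Rightarrow> 'a::metric_space) \<Rightarrow> real" and L :: real
  assumes cat: "CAT_minus_one TYPE('a)"
    and extend: "\<And>c p q. geodesic_segment c (p::'a) q \<Longrightarrow>
                   \<exists>\<gamma>\<in>SH. \<forall>t\<in>{0..dist p q}. \<gamma> t = c t"
    and PhiH: "\<Phi> \<in> Hclass"
    and hoel: "\<exists>\<alpha> C. hoelder_SH \<Phi> \<alpha> C \<and> C \<le> L"
    and hoel_hat: "\<exists>\<beta> C. hoelder_SH (hat \<Phi>) \<beta> C \<and> C \<le> L"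
    and bound: "\<forall>\<gamma>\<in>SH. \<bar>\<Phi> \<gamma>\<bar> \<le> L"
  shows "\<exists>D :: real \<Rightarrow> real. \<forall>\<gamma>1\<in>SH. \<forall>\<gamma>2\<in>SH. \<forall>r\<ge>0. \<forall>t1 t2.
           dist (\<gamma>1 0) (\<gamma>2 0) \<le> r \<and> dist (\<gamma>1 t1) (\<gamma>2 t2) \<le> r \<longrightarrow>
           \<bar>dPhi \<Phi> (\<gamma>1 0) (\<gamma>1 t1) - dPhi \<Phi> (\<gamma>2 0) (\<gamma>2 t2)\<bar> \<le> D r"
proof -
  obtain \<alpha> C where hA: "hoelder_SH \<Phi> \<alpha> C" using hoel by blast
  obtain \<beta> C' where hB: "hoelder_SH (hat \<Phi>) \<beta> C'" using hoel_hat by blast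
  have bound_hat: "\<forall>\<gamma>\<in>SH. \<bar>hat \<Phi> \<gamma>\<bar> \<le> L"
    using bound flip_SH by (auto simp: hat_def)
  have gs: "geodesic_space TYPE('a)" using cat by (simp add: CAT_minus_one_def)
  show ?thesis
  proof (intro exI[of _ "\<lambda>r. D0 \<alpha> C L r + D0 \<beta> C' L r"] ballI allI impI, elim conjE)
    fix \<gamma>1 \<gamma>2 :: "real \<Rightarrow> 'a" and r t1 t2 :: real
    assume g1: "\<gamma>1 \<in> SH" and g2: "\<gamma>2 \<in> SH" and r: "0 \<le> r"
      and d0: "dist (\<gamma>1 0) (\<gamma>2 0) \<le> r" and d1: "dist (\<gamma>1 t1) (\<gamma>2 t2) \<le> r"
    define p1 where "p1 = \<gamma>1 0"
    define q1 where "q1 = \<gamma>1 t1"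
    define p2 where "p2 = \<gamma>2 0"
    define q2 where "q2 = \<gamma>2 t2"
    define T1 where "T1 = dist p1 q1"
    define T2 where "T2 = dist p2 q2"
    obtain \<sigma>1 where s1: "\<sigma>1 \<in> SH" "\<sigma>1 0 = p1" "\<sigma>1 T1 = q1" "dPhi \<Phi> p1 q1 = Iint \<Phi> \<sigma>1 T1"
      using dPhi_eq[OF exSH[OF g1, of t1], of \<Phi>] unfolding T1_def p1_def q1_def by blast
    obtain \<sigma>2 where s2: "\<sigma>2 \<in> SH" "\<sigma>2 0 = p2" "\<sigma>2 T2 = q2" "dPhi \<Phi> p2 q2 = Iint \<Phi> \<sigma>2 T2"
      using dPhi_eq[OF exSH[OF g2, of t2], of \<Phi>] unfolding T2_def p2_def q2_def by blast
    define T' where "T' = dist p1 q2"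
    obtain c where c: "geodesic_segment c p1 q2" using gs by (auto simp: geodesic_space_def)
    obtain \<tau> where tau: "\<tau> \<in> SH" "\<forall>t\<in>{0..T'}. \<tau> t = c t"
      using extend[OF c] unfolding T'_def by blast
    have T0: "0 \<le> T1" "0 \<le> T2" "0 \<le> T'" by (auto simp: T1_def T2_def T'_def)
    have tau0: "\<tau> 0 = p1" and tauT: "\<tau> T' = q2"
      using tau(2) T0 c by (auto simp: geodesic_segment_def T'_def)
    have A: "\<bar>Iint \<Phi> \<sigma>1 T1 - Iint \<Phi> \<tau> T'\<bar> \<le> D0 \<alpha> C L r"
      by (rule lemA[OF cat hA bound s1(1) tau(1) _ T0(1) T0(3)])
         (use s1 tau0 tauT d1 in \<open>auto simp: q1_def q2_def\<close>)
    have B: "\<bar>Iint (hat \<Phi>) (\<lambda>s. \<tau> (T' - s)) T' - Iint (hat \<Phi>) (\<lambda>s. \<sigma>2 (T2 - s)) T2\<bar> \<le> D0 \<beta> C' L r"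
      by (rule lemA[OF cat hB bound_hat rev_SH[OF tau(1)] rev_SH[OF s2(1)] _ T0(3) T0(2)])
         (use s2 tau0 tauT d0 in \<open>auto simp: p1_def p2_def\<close>)
    have B': "\<bar>Iint \<Phi> \<tau> T' - Iint \<Phi> \<sigma>2 T2\<bar> \<le> D0 \<beta> C' L r"
      using B Iint_rev[OF hA tau(1) T0(3)] Iint_rev[OF hA s2(1) T0(2)] by simp
    show "\<bar>dPhi \<Phi> (\<gamma>1 0) (\<gamma>1 t1) - dPhi \<Phi> (\<gamma>2 0) (\<gamma>2 t2)\<bar> \<le> D0 \<alpha> C L r + D0 \<beta> C' L r"
      using A B' s1(4) s2(4) unfolding p1_def q1_def p2_def q2_def by linarith
  qed
qed

end
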